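(* Let $p:X\to Y$ be a factor map between topological spaces and $\Delta=\{p^{-1}(y): y\in Y\}$. If $p$ has property (COMP), then $p$ has property (CONT).
   Context: A factor map $p:X\to Y$ is a surjective map such that $A\subset Y$ is open iff $p^{-1}(A)$ is open in $X$. A $\Delta$-map is a continuous map $h:X\to X$ such that for each $\omega\in\Delta$, $h(\omega)$ is contained in some element of $\Delta$; $\mathrm{End}(X,\Delta)$ is the monoid of all $\Delta$-maps and $\mathrm{End}(Y)=C(Y,Y)$ the monoid of continuous self-maps of $Y$. For $h\in\mathrm{End}(X,\Delta)$, $\psi(h):Y\to Y$ is the unique map with $p\circ h=\psi(h)\circ p$ (it is continuous). Property (COMP): for every compact $L\subset Y$ there is a compact $K\subset X$ with $p(K)=L$. Property (CONT): the map $\psi:\mathrm{End}(X,\Delta)\to\mathrm{End}(Y)$ is continuous with respect to the compact open topologies (generated by subbasic sets $\{f: f(K)\subset U\}$, $K$ compact, $U$ open). *)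

theory Defs
  imports "HOL-Analysis.Analysis"
begin

definition compact_open :: "'a topology \<Rightarrow> 'b topology \<Rightarrow> ('a \<Rightarrow> 'b) topology" where
  "compact_open X Y =
     subtopology
       (topology_generated_by {{f. f ` K \<subseteq> U} | K U. compactin X K \<and> openin Y U})
       {f. continuous_map X Y f}"

definition fibres :: "'a topology \<Rightarrow> 'b topology \<Rightarrow> ('a \<Rightarrow> 'b) \<Rightarrow> 'a set set" where
  "fibres X Y p = {{x \<in> topspace X. p x = y} | y. y \<in> topspace Y}"

definition delta_maps :: "'a topology \<Rightarrow> 'a set set \<Rightarrow> ('a \<Rightarrow> 'a) set" where
  "delta_maps X \<Delta> = {h. continuous_map X X h \<and> (\<forall>w\<in>\<Delta>. \<exists>w'\<in>\<Delta>. h ` w \<subseteq> w')}"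

text \<open>psi(h): the induced map Y -> Y with p o h = psi(h) o p (on Y; fixed as identity outside Y).\<close>
definition psi :: "'a topology \<Rightarrow> 'b topology \<Rightarrow> ('a \<Rightarrow> 'b) \<Rightarrow> ('a \<Rightarrow> 'a) \<Rightarrow> 'b \<Rightarrow> 'b" where
  "psi X Y p h y = (if y \<in> topspace Y then p (h (SOME x. x \<in> topspace X \<and> p x = y)) else y)"

definition has_COMP :: "'a topology \<Rightarrow> 'b topology \<Rightarrow> ('a \<Rightarrow> 'b) \<Rightarrow> bool" where
  "has_COMP X Y p \<longleftrightarrow> (\<forall>L. compactin Y L \<longrightarrow> (\<exists>K. compactin X K \<and> p ` K = L))"

definition has_CONT :: "'a topology \<Rightarrow> 'b topology \<Rightarrow> ('a \<Rightarrow> 'b) \<Rightarrow> bool" where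
  "has_CONT X Y p \<longleftrightarrow>
     continuous_map (subtopology (compact_open X X) (delta_maps X (fibres X Y p)))
                    (compact_open Y Y) (psi X Y p)"

end

theory Submission
  imports Defs
begin

lemma psi_p:
  assumes q: "quotient_map X Y p" and h: "h \<in> delta_maps X (fibres X Y p)"
    and x: "x \<in> topspace X"
  shows "psi X Y p h (p x) = p (h x)"
proof -
  have py: "p x \<in> topspace Y" using q x by (metis image_eqI quotient_imp_surjective_map)
  define x' where "x' = (SOME x'. x' \<in> topspace X \<and> p x' = p x)"
  have x': "x' \<in> topspace X \<and> p x' = p x" unfolding x'_def by (rule someI[of _ x]) (use x in auto)
  have w: "{z \<in> topspace X. p z = p x} \<in> fibres X Y p" unfolding fibres_def using py by blast
  then obtain w' where w': "w' \<in> fibres X Y p" "h ` {z \<in> topspace X. p z = p x} \<subseteq> w'"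
    using h unfolding delta_maps_def by blast
  then obtain y where y: "w' = {z \<in> topspace X. p z = y}" unfolding fibres_def by blast
  have "h x \<in> w'" "h x' \<in> w'" using w' x x' by auto
  then have "p (h x) = p (h x')" using y by auto
  then show ?thesis unfolding psi_def using py x'_def by simp
qed


lemma psi_cont:
  assumes q: "quotient_map X Y p" and h: "h \<in> delta_maps X (fibres X Y p)"
  shows "continuous_map Y Y (psi X Y p h)"
proof (rule continuous_compose_quotient_map[OF q])
  have hc: "continuous_map X X h" using h unfolding delta_maps_def by blast
  have c: "continuous_map X Y (p \<circ> h)"
    by (rule continuous_map_compose[OF hc quotient_imp_continuous_map[OF q]])
  show "continuous_map X Y (psi X Y p h \<circ> p)"
  proof (rule continuous_map_eq[OF c])
    fix x assume "x \<in> topspace X"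
    then show "(p \<circ> h) x = (psi X Y p h \<circ> p) x" by (simp add: psi_p[OF q h])
  qed
qed

lemma openin_sub_helper:
  assumes "openin T B" shows "openin (subtopology T S) (B \<inter> topspace (subtopology T S))"
proof -
  have "B \<inter> topspace (subtopology T S) = B \<inter> S"
    using openin_subset[OF assms] by (auto simp: topspace_subtopology)
  then show ?thesis using openin_subtopology_Int[OF assms] by simp
qed

theorem mainTheorem4:
  fixes X :: "'a topology" and Y :: "'b topology" and p :: "'a \<Rightarrow> 'b"
  assumes "quotient_map X Y p"
    and "has_COMP X Y p"
  shows "has_CONT X Y p"
proof -
  let ?\<Delta> = "delta_maps X (fibres X Y p)"
  let ?S = "{{f. f ` K \<subseteq> U} | K U. compactin X K \<and> openin X U}"
  let ?SY = "{{f. f ` K \<subseteq> U} | K U. compactin Y K \<and> openin Y U}"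
  let ?D = "subtopology (compact_open X X) ?\<Delta>"
  have D_eq: "?D = subtopology (topology_generated_by ?S) ({f. continuous_map X X f} \<inter> ?\<Delta>)"
    unfolding compact_open_def by (simp add: subtopology_subtopology)
  have tsD: "topspace ?D \<subseteq> ?\<Delta>" by (simp add: topspace_subtopology)
  have "continuous_map ?D (topology_generated_by ?SY) (psi X Y p)"
  proof (rule continuous_on_generated_topo)
    show "psi X Y p ` topspace ?D \<subseteq> \<Union> ?SY"
    proof -
      have "UNIV \<in> ?SY" by (rule CollectI, rule exI[of _ "{}"], rule exI[of _ "{}"]) auto
      then show ?thesis by blast
    qed
  next
    fix A assume "A \<in> ?SY"
    then obtain L V where A: "A = {f. f ` L \<subseteq> V}" and L: "compactin Y L" and V: "openin Y V" by blast
    obtain K where K: "compactin X K" "p ` K = L" using assms(2) L unfolding has_COMP_def by blast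
    define W where "W = {x \<in> topspace X. p x \<in> V}"
    have W: "openin X W" unfolding W_def
      by (rule openin_continuous_map_preimage[OF quotient_imp_continuous_map[OF assms(1)] V])
    have KX: "K \<subseteq> topspace X" using K compactin_subset_topspace by blast
    have eq: "psi X Y p -` A \<inter> topspace ?D = {f. f ` K \<subseteq> W} \<inter> topspace ?D"
    proof (intro set_eqI iffI)
      fix h assume h: "h \<in> psi X Y p -` A \<inter> topspace ?D"
      then have hd: "h \<in> ?\<Delta>" using tsD by blast
      then have hc: "continuous_map X X h" unfolding delta_maps_def by blast
      have "h ` K \<subseteq> W"
      proof
        fix z assume "z \<in> h ` K"
        then obtain x where x: "x \<in> K" "z = h x" by blast
        have "psi X Y p h ` L \<subseteq> V" using h A by blast
        moreover have "p x \<in> L" using K x by blast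
        ultimately have "psi X Y p h (p x) \<in> V" by blast
        moreover have "h x \<in> topspace X" using x KX hc using continuous_map_image_subset_topspace[OF hc] by blast
        ultimately show "z \<in> W" using psi_p[OF assms(1) hd] x KX unfolding W_def by auto
      qed
      then show "h \<in> {f. f ` K \<subseteq> W} \<inter> topspace ?D" using h by blast
    next
      fix h assume h: "h \<in> {f. f ` K \<subseteq> W} \<inter> topspace ?D"
      then have hd: "h \<in> ?\<Delta>" using tsD by blast
      have "psi X Y p h ` L \<subseteq> V"
      proof
        fix z assume "z \<in> psi X Y p h ` L"
        then obtain x where x: "x \<in> K" "z = psi X Y p h (p x)" using K by blast
        have "h x \<in> W" using h x by blast
        then have "p (h x) \<in> V" by (simp add: W_def)
        then show "z \<in> V" using psi_p[OF assms(1) hd] x KX by auto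
      qed
      then show "h \<in> psi X Y p -` A \<inter> topspace ?D" using h A by blast
    qed
    have "openin (topology_generated_by ?S) {f. f ` K \<subseteq> W}"
      by (rule topology_generated_by_Basis) (use K W in blast)
    then show "openin ?D (psi X Y p -` A \<inter> topspace ?D)"
      unfolding eq unfolding D_eq by (rule openin_sub_helper)
  qed
  moreover have "psi X Y p ` topspace ?D \<subseteq> {f. continuous_map Y Y f}"
    using psi_cont[OF assms(1)] tsD by blast
  ultimately show ?thesis
    unfolding has_CONT_def compact_open_def[of Y Y] continuous_map_in_subtopology
    by blast
qed



end
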